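(* Let $X=(T,E)$ and $Y=(Z,F)$ be colored graphs and let $W=(W_{i\alpha,j\beta})_{i\alpha,j\beta\in T\times Z}$ be the fundamental magic biunitary of $A(X*Y)$. Then for all $\alpha,\beta\in Z$ and all $i,j\in T$, $$\sum_{k\in T}W_{i\alpha,k\beta}=\sum_{k\in T}W_{k\alpha,j\beta};$$ in particular the element $V_{\alpha\beta}:=\sum_kW_{i\alpha,k\beta}$ is independent of $i$ (and equals $\sum_kW_{k\alpha,j\beta}$ for any $j$). The matrix $V=(V_{\alpha\beta})_{\alpha,\beta\in Z}$ is a magic biunitary.
   Context: A colored graph $X=(V,E)$ is a finite set $V$ with a partition $E=\{E_1,\dots,E_p\}$ of $(V\times V)-\Delta_V$. Free product: for $X=(T,E)$, $E=\{E_1,\dots,E_p\}$, and $Y=(Z,F)$, $F=\{F_1,\dots,F_q\}$, $X*Y$ has vertex set $T\times Z$ and partition $\{E_r^\circ\}\cup\{F_s^\circ\}$, $E_r^\circ=\{(i\alpha,j\alpha)\mid(i,j)\in E_r,\alpha\in Z\}$, $F_s^\circ=\{(i\alpha,j\beta)\mid i,j\in T,(\alpha,\beta)\in F_s\}$. A magic biunitary is a square matrix of projections whose rows and columns are partitions of unity. For a colored graph on $N$ vertices, $A(\cdot)$ is the quotient of the universal C*-algebra generated by the entries of an $N\times N$ magic biunitary $W$ by the relations $Wd=dW$, $d$ the Laplacian ($d_{ii}=0$, $d_{xy}=c(k)$ for $(x,y)$ in the $k$-th class, $c$ injective into ${\mathbb C}$); equivalently by the relations $\sum_{z:(z,y)\in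 C}W_{xz}=\sum_{z:(x,z)\in C}W_{zy}$ for every class $C$ of the partition. *)

theory Defs
  imports Complex_Main
begin

class cstar_algebra = real_normed_algebra_1 + banach +
  fixes cscale :: "complex \<Rightarrow> 'a \<Rightarrow> 'a"
    and cstar :: "'a \<Rightarrow> 'a"
  assumes cscale_of_real: "cscale (complex_of_real r) x = scaleR r x"
    and cscale_add_left: "cscale (a + b) x = cscale a x + cscale b x"
    and cscale_add_right: "cscale a (x + y) = cscale a x + cscale a y"
    and cscale_mult: "cscale (a * b) x = cscale a (cscale b x)"
    and cscale_mult_left: "cscale a (x * y) = cscale a x * y"
    and cscale_mult_right: "cscale a (x * y) = x * cscale a y"
    and norm_cscale: "norm (cscale a x) = cmod a * norm x"
    and cstar_add: "cstar (x + y) = cstar x + cstar y"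
    and cstar_cscale: "cstar (cscale a x) = cscale (cnj a) (cstar x)"
    and cstar_mult: "cstar (x * y) = cstar y * cstar x"
    and cstar_cstar: "cstar (cstar x) = x"
    and cstar_identity: "norm (cstar x * x) = (norm x)\<^sup>2"

definition is_projection :: "'a::cstar_algebra \<Rightarrow> bool" where
  "is_projection p \<longleftrightarrow> cstar p = p \<and> p * p = p"

definition magic_biunitary :: "'i set \<Rightarrow> ('i \<Rightarrow> 'i \<Rightarrow> 'a::cstar_algebra) \<Rightarrow> bool" where
  "magic_biunitary I W \<longleftrightarrow>
     (\<forall>x\<in>I. \<forall>y\<in>I. is_projection (W x y)) \<and>
     (\<forall>x\<in>I. (\<Sum>y\<in>I. W x y) = 1) \<and>
     (\<forall>y\<in>I. (\<Sum>x\<in>I. W x y) = 1)"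

definition colored_graph :: "'v set \<Rightarrow> ('v \<times> 'v) set set \<Rightarrow> bool" where
  "colored_graph V E \<longleftrightarrow> finite V \<and> (\<forall>C\<in>E. C \<noteq> {}) \<and> pairwise disjnt E \<and>
     \<Union>E = {(x, y). x \<in> V \<and> y \<in> V \<and> x \<noteq> y}"

definition free_prod_classes ::
  "'t set \<Rightarrow> ('t \<times> 't) set set \<Rightarrow> 'z set \<Rightarrow> ('z \<times> 'z) set set
    \<Rightarrow> (('t \<times> 'z) \<times> ('t \<times> 'z)) set set" where
  "free_prod_classes T E Z F =
     (\<lambda>C. {((i, a), (j, a)) | i j a. (i, j) \<in> C \<and> a \<in> Z}) ` E \<union>
     (\<lambda>D. {((i, a), (j, b)) | i j a b. i \<in> T \<and> j \<in> T \<and> (a, b) \<in> D}) ` F"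

definition graph_relations ::
  "'v set \<Rightarrow> ('v \<times> 'v) set set \<Rightarrow> ('v \<Rightarrow> 'v \<Rightarrow> 'a::cstar_algebra) \<Rightarrow> bool" where
  "graph_relations V E W \<longleftrightarrow>
     (\<forall>C\<in>E. \<forall>x\<in>V. \<forall>y\<in>V.
        (\<Sum>z\<in>{z\<in>V. (z, y) \<in> C}. W x z) = (\<Sum>z\<in>{z\<in>V. (x, z) \<in> C}. W z y))"

end

theory Submission
  imports Defs
begin

definition ec :: "complex \<Rightarrow> 'a::cstar_algebra" where "ec c = cscale c 1"

lemma cscale_zero_left: "cscale 0 (x::'a::cstar_algebra) = 0"
proof -
  have "cscale (0+0) x = cscale 0 x + cscale 0 x" by (rule cscale_add_left)
  thus ?thesis by simp
qed

lemma cscale_eq_ec: "cscale c (x::'a::cstar_algebra) = ec c * x"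
  unfolding ec_def by (metis cscale_mult_left mult_1_left)

lemma ec_commute: "(x::'a::cstar_algebra) * ec c = ec c * x"
  unfolding ec_def by (metis cscale_mult_left cscale_mult_right mult_1_left mult_1_right)

lemma ec_add: "ec (a + b) = (ec a + ec b :: 'a::cstar_algebra)"
  unfolding ec_def by (rule cscale_add_left)

lemma ec_mult: "ec (a * b) = (ec a * ec b :: 'a::cstar_algebra)"
  unfolding ec_def by (metis cscale_mult cscale_mult_left mult_1_left)

lemma ec_zero: "ec 0 = (0 :: 'a::cstar_algebra)"
  unfolding ec_def by (rule cscale_zero_left)

lemma ec_of_real: "ec (complex_of_real r) = (of_real r :: 'a::cstar_algebra)"
  unfolding ec_def by (metis cscale_of_real scaleR_conv_of_real mult_1_right)

lemma ec_one: "ec 1 = (1 :: 'a::cstar_algebra)"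
  using ec_of_real[of 1] by simp

lemma ec_of_nat: "ec (of_nat n) = (of_nat n :: 'a::cstar_algebra)"
  using ec_of_real[of "real n"] by simp

lemma norm_ec: "norm (ec c :: 'a::cstar_algebra) = cmod c"
  unfolding ec_def by (simp add: norm_cscale)

lemma ec_sum: "ec (sum f A) = (\<Sum>x\<in>A. ec (f x) :: 'a::cstar_algebra)"
  by (induction A rule: infinite_finite_induct) (simp_all add: ec_zero ec_add)

lemma cstar_zero: "cstar (0::'a::cstar_algebra) = 0"
proof -
  have "cstar (0+0::'a) = cstar 0 + cstar 0" by (rule cstar_add)
  thus ?thesis by simp
qed

lemma cstar_one: "cstar (1::'a::cstar_algebra) = 1"
  by (metis cstar_cstar cstar_mult mult_1_right)

lemma cstar_minus: "cstar (- x::'a::cstar_algebra) = - cstar x"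
  by (metis add_eq_0_iff cstar_add cstar_zero)

lemma cstar_diff: "cstar (x - y::'a::cstar_algebra) = cstar x - cstar y"
  by (metis cstar_add cstar_minus diff_conv_add_uminus)

lemma cstar_sum: "cstar (sum f A) = (\<Sum>x\<in>A. cstar (f x) :: 'a::cstar_algebra)"
  by (induction A rule: infinite_finite_induct) (simp_all add: cstar_zero cstar_add)

lemma cstar_scaleR: "cstar (scaleR r x) = scaleR r (cstar (x::'a::cstar_algebra))"
  by (metis cscale_of_real cstar_cscale complex_cnj_complex_of_real)

lemma cstar_of_real: "cstar (of_real r::'a::cstar_algebra) = of_real r"
  by (simp add: of_real_def cstar_scaleR cstar_one)

lemma cstar_ec: "cstar (ec c::'a::cstar_algebra) = ec (cnj c)"
  unfolding ec_def by (simp add: cstar_cscale cstar_one)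

lemma cstar_power: "cstar (x ^ n) = (cstar x) ^ n" for x :: "'a::cstar_algebra"
  by (induction n) (simp_all add: cstar_one cstar_mult power_commutes)

lemma norm_cstar_mult: "norm (cstar x * x) = norm (x::'a::cstar_algebra) ^ 2"
  by (rule cstar_identity)

lemma herm_sq: "cstar h = h \<Longrightarrow> norm (h * h) = norm (h::'a::cstar_algebra) ^ 2"
  by (metis cstar_identity)

lemma herm_pow2: "cstar h = h \<Longrightarrow> norm (h ^ (2 ^ k)) = norm (h::'a::cstar_algebra) ^ (2 ^ k)"
proof (induction k)
  case 0 then show ?case by simp
next
  case (Suc k)
  have "h ^ (2 ^ Suc k) = h ^ (2^k) * h ^ (2^k)" by (simp add: power_add[symmetric] mult_2)
  moreover have "cstar (h ^ (2^k)) = h ^ (2^k)" using Suc.prems by (simp add: cstar_power)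
  ultimately have "norm (h ^ (2 ^ Suc k)) = norm (h ^ (2^k)) ^ 2" using herm_sq by metis
  also have "\<dots> = norm h ^ (2 ^ Suc k)" using Suc by (simp add: power_mult[symmetric] mult.commute)
  finally show ?case .
qed

lemma squeeze:
  fixes a t :: real
  assumes "t > 0" "a \<ge> 0" "\<And>k. a ^ (2 ^ k) \<le> 2 * t ^ (2 ^ k)"
  shows "a \<le> t"
proof (rule ccontr)
  assume "\<not> a \<le> t"
  hence r: "a / t > 1" using assms by simp
  obtain n where n: "2 < (a/t) ^ n" using real_arch_pow[OF r] by blast
  have "(a/t) ^ n \<le> (a/t) ^ (2^n)"
    using r by (intro power_increasing) (auto intro: less_imp_le[OF less_exp])
  also have "\<dots> = a ^ (2^n) / t ^ (2^n)" by (simp add: power_divide)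
  also have "\<dots> \<le> 2" using assms(3)[of n] assms(1) by (simp add: divide_le_eq)
  finally show False using n by simp
qed

lemma norm_proj_le: "is_projection p \<Longrightarrow> norm (p::'a::cstar_algebra) \<le> 1"
proof -
  assume "is_projection p"
  hence "norm p ^ 2 = norm p" unfolding is_projection_def using cstar_identity[of p] by simp
  hence "norm p * norm p = norm p * 1" by (simp add: power2_eq_square)
  thus ?thesis by (metis mult_left_cancel norm_zero order_refl zero_le_one norm_eq_zero)
qed

lemma mult_of_real_commute: "of_real r * x = x * (of_real r :: 'a::real_normed_algebra_1)"
  by (simp add: of_real_def)

lemma proj_compl: "is_projection p \<Longrightarrow> is_projection (1 - p::'a::cstar_algebra)"
  unfolding is_projection_def by (simp add: cstar_diff cstar_one algebra_simps)

lemma corner_pow: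
  fixes p a :: "'a::cstar_algebra"
  assumes "is_projection p" "p * a = a" "a * p = a"
  shows "(of_real t * (1 - p) + a) ^ Suc n = of_real (t ^ Suc n) * (1 - p) + a ^ Suc n"
proof (induction n)
  case 0 then show ?case by simp
next
  case (Suc n)
  have pp: "p * p = p" using assms(1) unfolding is_projection_def by simp
  have z1: "(1 - p) * a = 0" using assms(2) by (simp add: algebra_simps)
  have z2: "a ^ Suc n * (1 - p) = 0"
  proof -
    have "a ^ Suc n * (1 - p) = a ^ n * (a * (1 - p))" by (simp only: power_Suc2 mult.assoc)
    also have "a * (1 - p) = 0" using assms(3) by (simp add: algebra_simps)
    finally show ?thesis by simp
  qed
  have z3: "(1 - p) * (1 - p) = 1 - p" using pp by (simp add: algebra_simps)
  have "(of_real t * (1 - p) + a) ^ Suc (Suc n) = (of_real (t ^ Suc n) * (1 - p) + a ^ Suc n) * (of_real t * (1 - p) + a)"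
    using Suc by (simp only: power_Suc2)
  also have "\<dots> = of_real (t ^ Suc n) * of_real t * ((1 - p) * (1 - p)) + of_real (t ^ Suc n) * ((1-p) * a)
      + of_real t * (a ^ Suc n * (1 - p)) + a ^ Suc n * a"
    by (simp add: of_real_def algebra_simps)
  also have "\<dots> = of_real (t ^ Suc (Suc n)) * (1 - p) + a ^ Suc (Suc n)"
    by (simp only: z1 z2 z3 mult_zero_right add_0_right of_real_mult[symmetric] power_Suc2[symmetric])
  finally show ?case .
qed

lemma corner_norm:
  fixes p a :: "'a::cstar_algebra"
  assumes "is_projection p" "p * a = a" "a * p = a" "cstar a = a" "t > 0" "norm a \<le> t"
  shows "norm (of_real t * (1 - p) + a) \<le> t"
proof -
  let ?x = "of_real t * (1 - p) + a"
  have herm: "cstar ?x = ?x"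
    using assms(1,4) by (simp add: cstar_add cstar_scaleR cstar_diff cstar_one
        is_projection_def of_real_def)
  have n1: "norm (1 - p) \<le> 1" using norm_proj_le proj_compl assms(1) by blast
  show ?thesis
  proof (rule squeeze[OF assms(5) norm_ge_zero])
    fix k :: nat
    have "norm ?x ^ (2^k) = norm (?x ^ Suc (2^k - 1))" using herm_pow2[OF herm, of k] by simp
    also have "\<dots> = norm (of_real (t ^ (2^k)) * (1 - p) + a ^ (2^k))"
      using corner_pow[OF assms(1-3), of t "2^k - 1"] by simp
    also have "\<dots> \<le> norm (of_real (t ^ (2^k)) * (1 - p)) + norm (a ^ (2^k))" by (rule norm_triangle_ineq)
    also have "norm (of_real (t ^ (2^k)) * (1 - p)) \<le> t ^ (2^k)"
    proof -
      have "norm (of_real (t ^ (2^k)) * (1 - p)) = t ^ (2^k) * norm (1 - p)"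
        using assms(5) by (simp add: scaleR_conv_of_real[symmetric] del: of_real_power)
      also have "\<dots> \<le> t ^ (2^k)" using n1 assms(5) by (simp add: mult_left_le)
      finally show ?thesis .
    qed
    also have "norm (a ^ (2^k)) \<le> t ^ (2^k)"
      using norm_power_ineq[of a "2^k"] power_mono[OF assms(6) norm_ge_zero, of "2^k"] by linarith
    finally show "norm ?x ^ (2^k) \<le> 2 * t ^ (2^k)" by simp
  qed
qed

lemma proj_norm_shift:
  fixes q :: "'a::cstar_algebra"
  assumes "is_projection q" "t \<ge> 1"
  shows "norm (of_real t - q) \<le> t"
proof -
  have "norm (of_real t * (1 - q) + of_real (t - 1) * q) \<le> t"
  proof (rule corner_norm[OF assms(1)])
    show "q * (of_real (t - 1) * q) = of_real (t - 1) * q" "of_real (t - 1) * q * q = of_real (t - 1) * q"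
      using assms(1) by (simp add: is_projection_def of_real_def)+
    show "cstar (of_real (t - 1) * q) = of_real (t - 1) * q"
      using assms(1) by (simp add: is_projection_def of_real_def cstar_scaleR)
    show "t > 0" using assms by simp
    show "norm (of_real (t - 1) * q) \<le> t"
    proof -
      have "norm (of_real (t - 1) * q) = (t - 1) * norm q"
        using assms(2) by (simp add: scaleR_conv_of_real[symmetric] del: of_real_diff)
      also have "\<dots> \<le> (t - 1) * 1" using norm_proj_le[OF assms(1)] assms(2) by (intro mult_left_mono) auto
      finally show ?thesis by simp
    qed
  qed
  moreover have "of_real t * (1 - q) + of_real (t - 1) * q = of_real t - q"
    by (simp add: algebra_simps)
  ultimately show ?thesis by simp
qed

lemma conj_norm_shift:
  fixes p h :: "'a::cstar_algebra"
  assumes "is_projection p" "cstar h = h" "t > 0" "norm (of_real t - h) \<le> t"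
  shows "norm (of_real t - p * h * p) \<le> t"
proof -
  have pp: "p * p = p" and ps: "cstar p = p" using assms(1) by (auto simp: is_projection_def)
  let ?a = "p * (of_real t - h) * p"
  have "norm (of_real t * (1 - p) + ?a) \<le> t"
  proof (rule corner_norm[OF assms(1)])
    show "p * ?a = ?a" "?a * p = ?a" using pp by (simp_all add: mult.assoc[symmetric]) (simp add: mult.assoc)
    show "cstar ?a = ?a" using ps assms(2) by (simp add: cstar_mult cstar_diff cstar_of_real mult.assoc)
    show "t > 0" by fact
    have "norm ?a \<le> norm p * norm (of_real t - h) * norm p" 
      using norm_mult_ineq[of "p * (of_real t - h)" p] mult_right_mono[OF norm_mult_ineq[of p "of_real t - h"] norm_ge_zero[of p]]
      by linarith
    also have "\<dots> \<le> 1 * t * 1" using norm_proj_le[OF assms(1)] assms(3,4)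
      by (intro mult_mono) auto
    finally show "norm ?a \<le> t" by simp
  qed
  moreover have "of_real t * (1 - p) + ?a = of_real t - p * h * p"
    using pp by (simp add: algebra_simps of_real_def)
  ultimately show ?thesis by simp
qed

lemma lincomb: "a *\<^sub>R (u + w) + b *\<^sub>R (u - w) = (a+b) *\<^sub>R u + (a-b) *\<^sub>R (w::'v::real_vector)"
  by (simp add: algebra_simps)
lemma norm_ofr: "0 \<le> a \<Longrightarrow> norm (of_real a * (x::'a::real_normed_algebra_1)) = a * norm x"
proof -
  assume a: "0 \<le> a"
  have "of_real a * x = a *\<^sub>R x" by (simp add: scaleR_conv_of_real)
  thus ?thesis using a by simp
qed

lemma circle_bound:
  fixes g :: "'a::cstar_algebra"
  assumes herm: "cstar g = g" and n1: "norm (1 + g) \<le> 1" and n2: "norm (1 - g) \<le> 1"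
    and lam: "cmod l = 1"
  shows "norm (1 + ec l * g) \<le> 1"
proof -
  let ?z = "1 + ec l * g"
  define c where "c = Re l"
  have cabs: "\<bar>c\<bar> \<le> 1" using abs_Re_le_cmod[of l] lam c_def by simp
  have cz: "cstar ?z = 1 + ec (cnj l) * g"
    by (simp only: cstar_add cstar_one cstar_mult cstar_ec herm ec_commute[of g "cnj l"])
  have e1: "ec l + ec (cnj l) = (of_real (2 * c) :: 'a)"
  proof -
    have "ec l + ec (cnj l) = (ec (complex_of_real (2*c)) :: 'a)"
      by (simp only: ec_add[symmetric] complex_add_cnj c_def)
    thus ?thesis by (simp only: ec_of_real)
  qed
  have e2: "ec (cnj l) * ec l = (1 :: 'a)"
  proof -
    have "cnj l * l = complex_of_real ((cmod l)\<^sup>2)" by (simp only: complex_norm_square mult.commute)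
    thus ?thesis using lam by (simp add: ec_mult[symmetric] ec_one)
  qed
  have "cstar ?z * ?z = 1 + (ec l + ec (cnj l)) * g + (ec (cnj l) * ec l) * (g * g)"
  proof -
    have "(1 + ec (cnj l) * g) * (1 + ec l * g) = 1 + ec l * g + ec (cnj l) * g + ec (cnj l) * (g * ec l) * g"
      by (simp add: algebra_simps)
    also have "\<dots> = 1 + ec l * g + ec (cnj l) * g + ec (cnj l) * (ec l * g) * g"
      by (simp only: ec_commute[of g l])
    also have "\<dots> = 1 + (ec l + ec (cnj l)) * g + (ec (cnj l) * ec l) * (g * g)"
      by (simp add: algebra_simps)
    finally show ?thesis unfolding cz .
  qed
  also have "\<dots> = 1 + of_real (2 * c) * g + g * g" using e1 e2 by simp
  also have "\<dots> = of_real ((1 + c) / 2) * ((1 + g) * (1 + g)) + of_real ((1 - c) / 2) * ((1 - g) * (1 - g))"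
proof -
  have X: "(1+g)*(1+g) = (1 + g*g) + 2 *\<^sub>R g" by (simp add: algebra_simps scaleR_2)
  have Y: "(1-g)*(1-g) = (1 + g*g) - 2 *\<^sub>R g" by (simp add: algebra_simps scaleR_2)
  have "of_real ((1 + c) / 2) * ((1 + g) * (1 + g)) + of_real ((1 - c) / 2) * ((1 - g) * (1 - g))
     = ((1 + c) / 2) *\<^sub>R ((1 + g*g) + 2 *\<^sub>R g) + ((1 - c) / 2) *\<^sub>R ((1 + g*g) - 2 *\<^sub>R g)"
    unfolding X Y by (simp only: scaleR_conv_of_real)
  also have "\<dots> = ((1 + c) / 2 + (1 - c) / 2) *\<^sub>R (1 + g*g) + ((1 + c) / 2 - (1 - c) / 2) *\<^sub>R (2 *\<^sub>R g)"
    by (rule lincomb)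
  also have "\<dots> = (1 + g*g) + c *\<^sub>R (2 *\<^sub>R g)"
  proof -
    have "(1 + c) / 2 + (1 - c) / 2 = (1::real)" "(1 + c) / 2 - (1 - c) / 2 = c" by (simp_all add: field_simps)
    thus ?thesis by (simp only: scaleR_one)
  qed
  also have "\<dots> = 1 + of_real (2 * c) * g + g * g" by (simp add: scaleR_conv_of_real[symmetric] algebra_simps del: of_real_mult)
  finally show ?thesis by simp
qed
  finally have eq: "cstar ?z * ?z = of_real ((1 + c) / 2) * ((1 + g) * (1 + g)) + of_real ((1 - c) / 2) * ((1 - g) * (1 - g))" .
  have b1: "norm ((1 + g) * (1 + g)) \<le> 1"
    by (rule order_trans[OF norm_mult_ineq]) (rule mult_le_one[OF n1 norm_ge_zero n1])
  have b2: "norm ((1 - g) * (1 - g)) \<le> 1"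
    by (rule order_trans[OF norm_mult_ineq]) (rule mult_le_one[OF n2 norm_ge_zero n2])
  have "norm (cstar ?z * ?z) \<le> (1 + c) / 2 * norm ((1 + g) * (1 + g)) + (1 - c) / 2 * norm ((1 - g) * (1 - g))"
    unfolding eq
  proof (rule order_trans[OF norm_triangle_ineq])
    have "0 \<le> (1 + c) / 2" "0 \<le> (1 - c) / 2" using cabs by auto
    thus "norm (of_real ((1 + c) / 2) * ((1 + g) * (1 + g))) + norm (of_real ((1 - c) / 2) * ((1 - g) * (1 - g)))
      \<le> (1 + c) / 2 * norm ((1 + g) * (1 + g)) + (1 - c) / 2 * norm ((1 - g) * (1 - g))"
      by (simp only: norm_ofr order_refl)
  qed
  also have "\<dots> \<le> (1 + c) / 2 * 1 + (1 - c) / 2 * 1"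
    using cabs b1 b2 by (intro add_mono mult_left_mono) auto
  also have "\<dots> = 1" by (simp add: field_simps)
  finally have "norm ?z ^ 2 \<le> 1" by (simp add: cstar_identity)
  thus ?thesis by (simp add: power_le_one_iff)
qed

lemma ec_g_pow: "ec a * g * (ec b * g ^ k) = ec (a * b) * (g::'a::cstar_algebra) ^ Suc k"
proof -
  have "ec a * g * (ec b * g ^ k) = ec a * (g * ec b) * g ^ k" by (simp only: mult.assoc)
  also have "\<dots> = ec a * ec b * (g * g ^ k)" by (simp only: ec_commute[of g b] mult.assoc)
  finally show ?thesis by (simp only: ec_mult power_Suc)
qed

lemma binom_exists:
  fixes g :: "'a::cstar_algebra"
  shows "\<exists>c. c 0 = 1 \<and> c 1 = of_nat n \<and> (\<forall>\<mu>. (1 + ec \<mu> * g) ^ n = (\<Sum>k\<le>n. ec (c k * \<mu> ^ k) * g ^ k))"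
proof (induction n)
  case 0
  show ?case by (rule exI[of _ "\<lambda>k. if k = 0 then 1 else 0"]) (simp add: ec_one)
next
  case (Suc n)
  then obtain c where c0: "c 0 = 1" and c1: "c 1 = of_nat n"
    and cp: "\<And>\<mu>. (1 + ec \<mu> * g) ^ n = (\<Sum>k\<le>n. ec (c k * \<mu> ^ k) * g ^ k)" by blast
  define c' where "c' k = (if k \<le> n then c k else 0) + (if k = 0 then 0 else c (k - 1))" for k
  have "c' 0 = 1" using c0 by (simp add: c'_def)
  moreover have "c' 1 = of_nat (Suc n)" using c0 c1 by (cases n) (auto simp: c'_def)
  moreover have "(1 + ec \<mu> * g) ^ Suc n = (\<Sum>k\<le>Suc n. ec (c' k * \<mu> ^ k) * g ^ k)" for \<mu>
  proof -
    let ?S = "\<Sum>k\<le>n. ec (c k * \<mu> ^ k) * g ^ k"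
    have "(1 + ec \<mu> * g) ^ Suc n = ?S + ec \<mu> * g * ?S"
      by (simp only: power_Suc cp distrib_right mult_1_left)
    also have "ec \<mu> * g * ?S = (\<Sum>k\<le>n. ec (c k * \<mu> ^ Suc k) * g ^ Suc k)"
      by (simp only: sum_distrib_left ec_g_pow mult.left_commute[of \<mu>] power_Suc)
    also have "\<dots> = (\<Sum>k\<le>Suc n. ec ((if k = 0 then 0 else c (k - 1)) * \<mu> ^ k) * g ^ k)"
      by (simp only: sum.atMost_Suc_shift) (simp add: ec_zero)
    also have "?S = (\<Sum>k\<le>Suc n. ec ((if k \<le> n then c k else 0) * \<mu> ^ k) * g ^ k)"
      by (simp add: ec_zero)
    finally show ?thesis
      by (simp only: c'_def distrib_right ec_add sum.distrib[symmetric])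
  qed
  ultimately show ?case by blast
qed

lemma omega_N:
  assumes "N > 0"
  shows "cis (2 * pi / real N) ^ N = 1"
  using assms by (simp add: DeMoivre)

lemma omega_ne1:
  assumes "N > 0" "\<not> N dvd j"
  shows "cis (2 * pi / real N) ^ j \<noteq> 1"
proof
  assume h: "cis (2 * pi / real N) ^ j = 1"
  let ?r = "j mod N"
  have "cis (2 * pi / real N) ^ j = (cis (2 * pi / real N) ^ N) ^ (j div N) * cis (2 * pi / real N) ^ ?r"
    by (simp only: power_mult[symmetric] power_add[symmetric] mult_div_mod_eq)
  also have "\<dots> = cis (2 * pi / real N) ^ ?r" using omega_N[OF assms(1)] by simp
  also have "\<dots> = cis (2 * pi * real ?r / real N)" by (simp add: DeMoivre mult.commute mult.left_commute)
  finally have "cis (2 * pi * real ?r / real N) = cis (2 * pi * real 0 / real N)" using h by simp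
  moreover have "?r \<in> {..<N}" "0 \<in> {..<N}" using assms(1) by auto
  ultimately have "?r = 0"
    using bij_betw_roots_unity[OF assms(1)] unfolding bij_betw_def inj_on_def by blast
  thus False using assms(2) by auto
qed

lemma root_sum:
  fixes n k :: nat
  assumes "n \<ge> 1" "k \<le> n"
  shows "(\<Sum>m<Suc n. (cis (2 * pi / real (Suc n)) ^ (n + k)) ^ m) = (if k = 1 then of_nat (Suc n) else 0)"
proof (cases "k = 1")
  case True
  then show ?thesis using omega_N[of "Suc n"] by simp
next
  case False
  let ?w = "cis (2 * pi / real (Suc n))"
  have nd: "\<not> Suc n dvd (n + k)"
  proof
    assume "Suc n dvd (n + k)"
    then obtain q where q: "n + k = Suc n * q" by (auto elim: dvdE)
    show False
    proof (cases q)
      case 0 then show ?thesis using q assms by simp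
    next
      case (Suc q')
      show ?thesis
      proof (cases q')
        case 0 then show ?thesis using q Suc False by simp
      next
        case (Suc q'') then show ?thesis using q \<open>q = Suc q'\<close> assms by (simp add: algebra_simps)
      qed
    qed
  qed
  have ne: "?w ^ (n + k) \<noteq> 1" using omega_ne1[OF _ nd] by simp
  have "(?w ^ (n + k)) ^ Suc n = (?w ^ Suc n) ^ (n + k)" by (simp only: power_mult[symmetric] mult.commute)
  also have "\<dots> = 1" using omega_N[of "Suc n"] by simp
  finally have "(?w ^ (n + k)) ^ Suc n = 1" .
  then show ?thesis using False geometric_sum[OF ne, of "Suc n"] by simp
qed

lemma extract_lin:
  fixes g :: "'a::cstar_algebra"
  assumes n: "n \<ge> 1" and cp: "\<And>\<mu>. (1 + ec \<mu> * g) ^ n = (\<Sum>k\<le>n. ec (c k * \<mu> ^ k) * g ^ k)"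
  shows "(\<Sum>m<Suc n. ec (cis (2 * pi / real (Suc n)) ^ (m * n)) * (1 + ec (cis (2 * pi / real (Suc n)) ^ m) * g) ^ n)
       = ec (c 1 * of_nat (Suc n)) * g"
proof -
  let ?w = "cis (2 * pi / real (Suc n))"
  have "(\<Sum>m<Suc n. ec (?w ^ (m * n)) * (1 + ec (?w ^ m) * g) ^ n)
      = (\<Sum>m<Suc n. \<Sum>k\<le>n. ec (c k * (?w ^ (n + k)) ^ m) * g ^ k)"
  proof (rule sum.cong[OF refl])
    fix m
    have "ec (?w ^ (m * n)) * (1 + ec (?w ^ m) * g) ^ n = (\<Sum>k\<le>n. ec (?w ^ (m * n)) * (ec (c k * (?w ^ m) ^ k) * g ^ k))"
      by (simp only: cp sum_distrib_left)
    also have "\<dots> = (\<Sum>k\<le>n. ec (c k * (?w ^ (n + k)) ^ m) * g ^ k)"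
    proof (rule sum.cong[OF refl])
      fix k
      have "?w ^ (m * n) * (c k * (?w ^ m) ^ k) = c k * (?w ^ (m * n) * ?w ^ (m * k))"
        by (simp only: power_mult[symmetric]) (simp add: mult_ac)
      also have "?w ^ (m * n) * ?w ^ (m * k) = ?w ^ (m * n + m * k)" by (rule power_add[symmetric])
      also have "m * n + m * k = (n + k) * m" by (simp add: algebra_simps)
      also have "?w ^ ((n + k) * m) = (?w ^ (n + k)) ^ m" by (rule power_mult)
      finally have "?w ^ (m * n) * (c k * (?w ^ m) ^ k) = c k * (?w ^ (n + k)) ^ m" .
      thus "ec (?w ^ (m * n)) * (ec (c k * (?w ^ m) ^ k) * g ^ k) = ec (c k * (?w ^ (n + k)) ^ m) * g ^ k"
        by (simp only: mult.assoc[symmetric] ec_mult[symmetric])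
    qed
    finally show "ec (?w ^ (m * n)) * (1 + ec (?w ^ m) * g) ^ n = (\<Sum>k\<le>n. ec (c k * (?w ^ (n + k)) ^ m) * g ^ k)" .
  qed
  also have "\<dots> = (\<Sum>k\<le>n. \<Sum>m<Suc n. ec (c k * (?w ^ (n + k)) ^ m) * g ^ k)" by (rule sum.swap)
  also have "\<dots> = (\<Sum>k\<le>n. ec (c k * (\<Sum>m<Suc n. (?w ^ (n + k)) ^ m)) * g ^ k)"
    by (simp only: sum_distrib_right[symmetric] ec_sum[symmetric] sum_distrib_left)
  also have "\<dots> = (\<Sum>k\<le>n. if k = 1 then ec (c 1 * of_nat (Suc n)) * g else 0)"
  proof (rule sum.cong[OF refl])
    fix k assume "k \<in> {..n}"
    hence "k \<le> n" by simp
    thus "ec (c k * (\<Sum>m<Suc n. (?w ^ (n + k)) ^ m)) * g ^ k = (if k = 1 then ec (c 1 * of_nat (Suc n)) * g else 0)"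
      using root_sum[OF n, of k] by (simp add: ec_zero)
  qed
  also have "\<dots> = ec (c 1 * of_nat (Suc n)) * g" using n by (simp add: sum.delta)
  finally show ?thesis .
qed

lemma herm_zero:
  fixes g :: "'a::cstar_algebra"
  assumes herm: "cstar g = g" and n1: "norm (1 + g) \<le> 1" and n2: "norm (1 - g) \<le> 1"
  shows "g = 0"
proof -
  have bound: "real n * norm g \<le> 1" if n: "n \<ge> 1" for n :: nat
  proof -
    obtain c where c1: "c 1 = of_nat n" and cp: "\<And>\<mu>. (1 + ec \<mu> * g) ^ n = (\<Sum>k\<le>n. ec (c k * \<mu> ^ k) * g ^ k)"
      using binom_exists[of n g] by blast
    let ?w = "cis (2 * pi / real (Suc n))"
    have "real (n * Suc n) * norm g = norm (ec (c 1 * of_nat (Suc n)) * g)"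
      by (simp only: c1 of_nat_mult[symmetric] ec_of_nat norm_ofr[symmetric] of_real_of_nat_eq of_nat_0_le_iff)
    also have "\<dots> = norm (\<Sum>m<Suc n. ec (?w ^ (m * n)) * (1 + ec (?w ^ m) * g) ^ n)"
      using extract_lin[OF n cp] by simp
    also have "\<dots> \<le> (\<Sum>m<Suc n. norm (ec (?w ^ (m * n)) * (1 + ec (?w ^ m) * g) ^ n))"
      by (rule norm_sum)
    also have "\<dots> \<le> (\<Sum>m<Suc n. 1)"
    proof (rule sum_mono)
      fix m
      have "norm (ec (?w ^ (m * n)) * (1 + ec (?w ^ m) * g) ^ n :: 'a) \<le> norm (ec (?w ^ (m * n)) :: 'a) * norm ((1 + ec (?w ^ m) * g) ^ n)"
        by (rule norm_mult_ineq)
      also have "norm (ec (?w ^ (m * n)) :: 'a) = 1" by (simp add: norm_ec norm_power)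
      also have "norm ((1 + ec (?w ^ m) * g) ^ n) \<le> norm (1 + ec (?w ^ m) * g) ^ n" by (rule norm_power_ineq)
      also have "\<dots> \<le> 1"
        using circle_bound[OF herm n1 n2, of "?w ^ m"] by (simp add: norm_power power_le_one)
      finally show "norm (ec (?w ^ (m * n)) * (1 + ec (?w ^ m) * g) ^ n) \<le> 1" by simp
    qed
    also have "\<dots> = real (Suc n)" by simp
    finally have "real (Suc n) * (real n * norm g) \<le> real (Suc n) * 1" by (simp add: algebra_simps)
    thus ?thesis by (simp only: mult_le_cancel_left_pos of_nat_0_less_iff zero_less_Suc)
  qed
  have "norm g = 0"
  proof (rule ccontr)
    assume "norm g \<noteq> 0"
    hence pos: "norm g > 0" by simp
    obtain n :: nat where "1 / norm g < real n" using reals_Archimedean2 by blast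
    hence "1 < real n * norm g" using pos by (simp add: field_simps)
    moreover have "n \<ge> 1"
    proof -
      have "0 < 1 / norm g" using pos by simp
      hence "0 < real n" using \<open>1 / norm g < real n\<close> by linarith
      thus ?thesis by simp
    qed
    ultimately show False using bound by fastforce
  qed
  thus ?thesis by simp
qed

lemma scale_shift:
  fixes b :: "'a::cstar_algebra"
  assumes "m > 0"
  shows "1 + (1 / m) *\<^sub>R b = (1 / m) *\<^sub>R (of_real m + b)"
    and "1 - (1 / m) *\<^sub>R b = (1 / m) *\<^sub>R (of_real m - b)"
  using assms by (simp_all add: scaleR_add_right scaleR_diff_right of_real_def)

lemma proj_orth:
  fixes P :: "'k \<Rightarrow> 'a::cstar_algebra"
  assumes fin: "finite K" and proj: "\<And>k. k \<in> K \<Longrightarrow> is_projection (P k)"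
    and sum1: "(\<Sum>k\<in>K. P k) = 1" and ij: "i \<in> K" "j \<in> K" "i \<noteq> j"
  shows "P i * P j = 0"
proof -
  define p where "p = P i"
  define q where "q = P j"
  have pP: "is_projection p" "is_projection q" using proj ij unfolding p_def q_def by auto
  have pp: "p * p = p" "cstar p = p" "q * q = q" "cstar q = q" using pP unfolding is_projection_def by auto
  define K' where "K' = K - {i, j}"
  have finK': "finite K'" using fin K'_def by simp
  have split: "(\<Sum>k\<in>K. f k) = f i + f j + (\<Sum>k\<in>K'. f k)" for f :: "'k \<Rightarrow> 'a"
  proof -
    have "(\<Sum>k\<in>K. f k) = f i + (\<Sum>k\<in>K - {i}. f k)" using fin ij by (simp add: sum.remove)
    also have "(\<Sum>k\<in>K - {i}. f k) = f j + (\<Sum>k\<in>K - {i} - {j}. f k)" using fin ij by (simp add: sum.remove)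
    also have "K - {i} - {j} = K'" unfolding K'_def by auto
    finally show ?thesis by (simp add: add.assoc)
  qed
  define b where "b = p * q * p"
  have "p = p * (\<Sum>k\<in>K. P k) * p" using pp sum1 by simp
  also have "\<dots> = (\<Sum>k\<in>K. p * P k * p)" by (simp add: sum_distrib_left sum_distrib_right)
  also have "\<dots> = p * p * p + b + (\<Sum>k\<in>K'. p * P k * p)" unfolding split b_def p_def q_def ..
  finally have "p = p + b + (\<Sum>k\<in>K'. p * P k * p)" using pp by simp
  hence bneg: "b = - (\<Sum>k\<in>K'. p * P k * p)" by (simp add: eq_neg_iff_add_eq_0 add.assoc)
  have bherm: "cstar b = b" unfolding b_def using pp by (simp add: cstar_mult mult.assoc)
  have b0: "b = 0"
  proof (cases "K' = {}")
    case True then show ?thesis using bneg by simp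
  next
    case False
    define m where "m = real (card K')"
    have m1: "m \<ge> 1" using False finK' m_def by (simp add: Suc_leI card_gt_0_iff)
    have A: "norm (of_real m - b) \<le> m"
      unfolding b_def by (rule conj_norm_shift[OF pP(1) pp(4)]) (use m1 proj_norm_shift[OF pP(2) m1] in auto)
    have "of_real m + b = (\<Sum>k\<in>K'. 1 - p * P k * p)"
      using bneg by (simp add: sum_subtractf m_def)
    hence "norm (of_real m + b) \<le> (\<Sum>k\<in>K'. norm (1 - p * P k * p))" by (simp add: norm_sum)
    also have "\<dots> \<le> (\<Sum>k\<in>K'. 1)"
    proof (rule sum_mono)
      fix k assume k: "k \<in> K'"
      hence Pk: "is_projection (P k)" using proj K'_def by auto
      have "norm (of_real 1 - p * P k * p) \<le> 1"
        by (rule conj_norm_shift[OF pP(1)]) (use Pk proj_norm_shift[OF Pk, of 1] in \<open>auto simp: is_projection_def\<close>)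
      thus "norm (1 - p * P k * p) \<le> 1" by simp
    qed
    also have "\<dots> = m" by (simp add: m_def)
    finally have B: "norm (of_real m + b) \<le> m" .
    let ?g = "(1 / m) *\<^sub>R b"
    have mpos: "m > 0" using m1 by simp
    have "?g = 0"
    proof (rule herm_zero)
      show "cstar ?g = ?g" using bherm by (simp add: cstar_scaleR)
      show "norm (1 + ?g) \<le> 1" unfolding scale_shift(1)[OF mpos] using B mpos by (simp add: divide_le_eq)
      show "norm (1 - ?g) \<le> 1" unfolding scale_shift(2)[OF mpos] using A mpos by (simp add: divide_le_eq)
    qed
    thus ?thesis using mpos by simp
  qed
  have "norm (q * p) ^ 2 = norm (cstar (q * p) * (q * p))" by (simp add: cstar_identity)
  also have "cstar (q * p) * (q * p) = p * (q * q) * p" by (simp only: cstar_mult pp(2,4) mult.assoc)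
  also have "\<dots> = b" unfolding b_def using pp by simp
  finally have "q * p = 0" using b0 by simp
  hence "cstar (q * p) = 0" by (simp add: cstar_zero)
  thus ?thesis using pp by (simp add: cstar_mult p_def q_def)
qed

lemma block_sum:
  fixes f :: "'t \<Rightarrow> 'a::comm_monoid_add"
  assumes X: "colored_graph T E" and j: "j \<in> T"
  shows "(\<Sum>C\<in>E. \<Sum>k\<in>{k\<in>T. (k, j) \<in> C}. f k) = (\<Sum>k\<in>T - {j}. f k)"
    and "(\<Sum>C\<in>E. \<Sum>k\<in>{k\<in>T. (j, k) \<in> C}. f k) = (\<Sum>k\<in>T - {j}. f k)"
proof -
  have cg: "finite T \<and> (\<forall>C\<in>E. C \<noteq> {}) \<and> pairwise disjnt E \<and> \<Union>E = {(x, y). x \<in> T \<and> y \<in> T \<and> x \<noteq> y}"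
    using X unfolding colored_graph_def .
  have finT: "finite T" by (rule conjunct1[OF cg])
  have disj: "pairwise disjnt E" by (rule conjunct1[OF conjunct2[OF conjunct2[OF cg]]])
  have U: "\<Union>E = {(x, y). x \<in> T \<and> y \<in> T \<and> x \<noteq> y}" by (rule conjunct2[OF conjunct2[OF conjunct2[OF cg]]])
  have "E \<subseteq> Pow (T \<times> T)"
  proof
    fix C assume "C \<in> E"
    hence "C \<subseteq> \<Union>E" by blast
    thus "C \<in> Pow (T \<times> T)" unfolding U by auto
  qed
  hence finE: "finite E" by (rule finite_subset) (simp add: finT)
  have "(\<Sum>C\<in>E. \<Sum>k\<in>{k\<in>T. (k, j) \<in> C}. f k) = sum f (\<Union>C\<in>E. {k\<in>T. (k, j) \<in> C})"
  proof (rule sum.UNION_disjoint[symmetric])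
    show "finite E" by (rule finE)
    show "\<forall>C\<in>E. finite {k \<in> T. (k, j) \<in> C}" using finT by auto
    show "\<forall>C\<in>E. \<forall>D\<in>E. C \<noteq> D \<longrightarrow> {k \<in> T. (k, j) \<in> C} \<inter> {k \<in> T. (k, j) \<in> D} = {}"
      using disj unfolding pairwise_def disjnt_def by blast
  qed
  also have "(\<Union>C\<in>E. {k\<in>T. (k, j) \<in> C}) = T - {j}"
  proof
    show "(\<Union>C\<in>E. {k\<in>T. (k, j) \<in> C}) \<subseteq> T - {j}" using U by blast
    show "T - {j} \<subseteq> (\<Union>C\<in>E. {k\<in>T. (k, j) \<in> C})"
    proof
      fix k assume "k \<in> T - {j}"
      hence "(k, j) \<in> \<Union>E" using U j by auto
      thus "k \<in> (\<Union>C\<in>E. {k\<in>T. (k, j) \<in> C})" using \<open>k \<in> T - {j}\<close> by auto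
    qed
  qed
  finally show "(\<Sum>C\<in>E. \<Sum>k\<in>{k\<in>T. (k, j) \<in> C}. f k) = (\<Sum>k\<in>T - {j}. f k)" .
  have "(\<Sum>C\<in>E. \<Sum>k\<in>{k\<in>T. (j, k) \<in> C}. f k) = sum f (\<Union>C\<in>E. {k\<in>T. (j, k) \<in> C})"
  proof (rule sum.UNION_disjoint[symmetric])
    show "finite E" by (rule finE)
    show "\<forall>C\<in>E. finite {k \<in> T. (j, k) \<in> C}" using finT by auto
    show "\<forall>C\<in>E. \<forall>D\<in>E. C \<noteq> D \<longrightarrow> {k \<in> T. (j, k) \<in> C} \<inter> {k \<in> T. (j, k) \<in> D} = {}"
      using disj unfolding pairwise_def disjnt_def by blast
  qed
  also have "(\<Union>C\<in>E. {k\<in>T. (j, k) \<in> C}) = T - {j}"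
  proof
    show "(\<Union>C\<in>E. {k\<in>T. (j, k) \<in> C}) \<subseteq> T - {j}" using U by blast
    show "T - {j} \<subseteq> (\<Union>C\<in>E. {k\<in>T. (j, k) \<in> C})"
    proof
      fix k assume "k \<in> T - {j}"
      hence "(j, k) \<in> \<Union>E" using U j by auto
      thus "k \<in> (\<Union>C\<in>E. {k\<in>T. (j, k) \<in> C})" using \<open>k \<in> T - {j}\<close> by auto
    qed
  qed
  finally show "(\<Sum>C\<in>E. \<Sum>k\<in>{k\<in>T. (j, k) \<in> C}. f k) = (\<Sum>k\<in>T - {j}. f k)" .
qed

lemma part1:
  fixes W :: "('t \<times> 'z) \<Rightarrow> ('t \<times> 'z) \<Rightarrow> 'a::cstar_algebra"
  assumes X: "colored_graph T E"
    and rel: "graph_relations (T \<times> Z) (free_prod_classes T E Z F) W"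
    and ab: "\<alpha> \<in> Z" "\<beta> \<in> Z" and ij: "i \<in> T" "j \<in> T"
  shows "(\<Sum>k\<in>T. W (i, \<alpha>) (k, \<beta>)) = (\<Sum>k\<in>T. W (k, \<alpha>) (j, \<beta>))"
proof -
  have finT: "finite T" using X unfolding colored_graph_def by (rule conjunct1)
  have eqC: "(\<Sum>k\<in>{k\<in>T. (k, j) \<in> C}. W (i, \<alpha>) (k, \<beta>)) = (\<Sum>k\<in>{k\<in>T. (i, k) \<in> C}. W (k, \<alpha>) (j, \<beta>))"
    if C: "C \<in> E" for C
  proof -
    define C' where "C' = {((i, a), (j, a)) | i j a. (i, j) \<in> C \<and> a \<in> Z}"
    have "C' \<in> free_prod_classes T E Z F" unfolding free_prod_classes_def C'_def using C by blast
    hence r: "(\<Sum>z\<in>{z\<in>T \<times> Z. (z, (j, \<beta>)) \<in> C'}. W (i, \<alpha>) z) = (\<Sum>z\<in>{z\<in>T \<times> Z. ((i, \<alpha>), z) \<in> C'}. W z (j, \<beta>))"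
      using rel ab ij unfolding graph_relations_def by blast
    have s1: "{z\<in>T \<times> Z. (z, (j, \<beta>)) \<in> C'} = (\<lambda>k. (k, \<beta>)) ` {k\<in>T. (k, j) \<in> C}"
      unfolding C'_def using ab by auto
    have s2: "{z\<in>T \<times> Z. ((i, \<alpha>), z) \<in> C'} = (\<lambda>k. (k, \<alpha>)) ` {k\<in>T. (i, k) \<in> C}"
      unfolding C'_def using ab by auto
    have i1: "inj_on (\<lambda>k. (k, \<beta>)) {k\<in>T. (k, j) \<in> C}" "inj_on (\<lambda>k. (k, \<alpha>)) {k\<in>T. (i, k) \<in> C}"
      by (auto simp: inj_on_def)
    show ?thesis using r unfolding s1 s2 sum.reindex[OF i1(1)] sum.reindex[OF i1(2)] by (simp add: comp_def)
  qed
  have "(\<Sum>k\<in>T - {j}. W (i, \<alpha>) (k, \<beta>)) = (\<Sum>C\<in>E. \<Sum>k\<in>{k\<in>T. (k, j) \<in> C}. W (i, \<alpha>) (k, \<beta>))"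
    using block_sum(1)[OF X ij(2), where f="\<lambda>k. W (i, \<alpha>) (k, \<beta>)"] by simp
  also have "\<dots> = (\<Sum>C\<in>E. \<Sum>k\<in>{k\<in>T. (i, k) \<in> C}. W (k, \<alpha>) (j, \<beta>))"
    using eqC by (rule sum.cong[OF refl])
  also have "\<dots> = (\<Sum>k\<in>T - {i}. W (k, \<alpha>) (j, \<beta>))"
    using block_sum(2)[OF X ij(1), where f="\<lambda>k. W (k, \<alpha>) (j, \<beta>)"] by simp
  finally have m: "(\<Sum>k\<in>T - {j}. W (i, \<alpha>) (k, \<beta>)) = (\<Sum>k\<in>T - {i}. W (k, \<alpha>) (j, \<beta>))" .
  have "(\<Sum>k\<in>T. W (i, \<alpha>) (k, \<beta>)) = W (i, \<alpha>) (j, \<beta>) + (\<Sum>k\<in>T - {j}. W (i, \<alpha>) (k, \<beta>))"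
    by (rule sum.remove[OF finT ij(2)])
  also have "\<dots> = W (i, \<alpha>) (j, \<beta>) + (\<Sum>k\<in>T - {i}. W (k, \<alpha>) (j, \<beta>))" using m by simp
  also have "\<dots> = (\<Sum>k\<in>T. W (k, \<alpha>) (j, \<beta>))"
    by (rule sum.remove[OF finT ij(1), symmetric])
  finally show ?thesis .
qed

theorem lemma6p1:
  fixes T :: "'t set" and E :: "('t \<times> 't) set set"
    and Z :: "'z set" and F :: "('z \<times> 'z) set set"
    and W :: "('t \<times> 'z) \<Rightarrow> ('t \<times> 'z) \<Rightarrow> 'a::cstar_algebra"
  assumes X: "colored_graph T E"
    and Y: "colored_graph Z F"
    and magic: "magic_biunitary (T \<times> Z) W"
    and rel: "graph_relations (T \<times> Z) (free_prod_classes T E Z F) W"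
  shows "(\<forall>\<alpha>\<in>Z. \<forall>\<beta>\<in>Z. \<forall>i\<in>T. \<forall>j\<in>T.
            (\<Sum>k\<in>T. W (i, \<alpha>) (k, \<beta>)) = (\<Sum>k\<in>T. W (k, \<alpha>) (j, \<beta>)))
       \<and> (\<forall>i\<in>T. magic_biunitary Z (\<lambda>\<alpha> \<beta>. \<Sum>k\<in>T. W (i, \<alpha>) (k, \<beta>)))"
proof (intro conjI ballI)
  fix \<alpha> \<beta> i j assume "\<alpha> \<in> Z" "\<beta> \<in> Z" "i \<in> T" "j \<in> T"
  thus "(\<Sum>k\<in>T. W (i, \<alpha>) (k, \<beta>)) = (\<Sum>k\<in>T. W (k, \<alpha>) (j, \<beta>))" using part1[OF X rel] by blast
next
  fix i assume i: "i \<in> T"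
  have finT: "finite T" using X unfolding colored_graph_def by (rule conjunct1)
  have finZ: "finite Z" using Y unfolding colored_graph_def by (rule conjunct1)
  have projW: "\<And>x y. x \<in> T \<times> Z \<Longrightarrow> y \<in> T \<times> Z \<Longrightarrow> is_projection (W x y)"
    and rowW: "\<And>x. x \<in> T \<times> Z \<Longrightarrow> (\<Sum>y\<in>T \<times> Z. W x y) = 1"
    and colW: "\<And>y. y \<in> T \<times> Z \<Longrightarrow> (\<Sum>x\<in>T \<times> Z. W x y) = 1"
    using magic unfolding magic_biunitary_def by auto
  show "magic_biunitary Z (\<lambda>\<alpha> \<beta>. \<Sum>k\<in>T. W (i, \<alpha>) (k, \<beta>))"
    unfolding magic_biunitary_def
  proof (intro conjI ballI)
    fix \<alpha> \<beta> assume a: "\<alpha> \<in> Z" and b: "\<beta> \<in> Z"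
    let ?P = "\<lambda>z. W (i, \<alpha>) z"
    have orth: "W (i, \<alpha>) (k, \<beta>) * W (i, \<alpha>) (l, \<beta>) = (if l = k then W (i, \<alpha>) (k, \<beta>) else 0)"
      if k: "k \<in> T" and l: "l \<in> T" for k l
    proof (cases "l = k")
      case True
      then show ?thesis using projW[of "(i, \<alpha>)" "(k, \<beta>)"] i a b k unfolding is_projection_def by auto
    next
      case False
      have "?P (k, \<beta>) * ?P (l, \<beta>) = 0"
        by (rule proj_orth[of "T \<times> Z" ?P]) (use finT finZ projW rowW i a b k l False in auto)
      then show ?thesis using False by simp
    qed
    show "is_projection (\<Sum>k\<in>T. W (i, \<alpha>) (k, \<beta>))"
      unfolding is_projection_def
    proof
      show "cstar (\<Sum>k\<in>T. W (i, \<alpha>) (k, \<beta>)) = (\<Sum>k\<in>T. W (i, \<alpha>) (k, \<beta>))"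
        using projW i a b unfolding is_projection_def by (simp add: cstar_sum)
      have "(\<Sum>k\<in>T. W (i, \<alpha>) (k, \<beta>)) * (\<Sum>k\<in>T. W (i, \<alpha>) (k, \<beta>))
          = (\<Sum>k\<in>T. \<Sum>l\<in>T. W (i, \<alpha>) (k, \<beta>) * W (i, \<alpha>) (l, \<beta>))"
        by (simp add: sum_distrib_left sum_distrib_right) (rule sum.swap)
      also have "\<dots> = (\<Sum>k\<in>T. \<Sum>l\<in>T. if l = k then W (i, \<alpha>) (k, \<beta>) else 0)"
        using orth by (intro sum.cong refl) auto
      also have "\<dots> = (\<Sum>k\<in>T. W (i, \<alpha>) (k, \<beta>))" using finT by simp
      finally show "(\<Sum>k\<in>T. W (i, \<alpha>) (k, \<beta>)) * (\<Sum>k\<in>T. W (i, \<alpha>) (k, \<beta>)) = (\<Sum>k\<in>T. W (i, \<alpha>) (k, \<beta>))" .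
    qed
  next
    fix \<alpha> assume a: "\<alpha> \<in> Z"
    have "(\<Sum>\<beta>\<in>Z. \<Sum>k\<in>T. W (i, \<alpha>) (k, \<beta>)) = (\<Sum>k\<in>T. \<Sum>\<beta>\<in>Z. W (i, \<alpha>) (k, \<beta>))" by (rule sum.swap)
    also have "\<dots> = (\<Sum>(k, \<beta>)\<in>T \<times> Z. W (i, \<alpha>) (k, \<beta>))" by (rule sum.cartesian_product)
    also have "\<dots> = (\<Sum>y\<in>T \<times> Z. W (i, \<alpha>) y)" by (simp add: case_prod_beta')
    also have "\<dots> = 1" using rowW i a by auto
    finally show "(\<Sum>\<beta>\<in>Z. \<Sum>k\<in>T. W (i, \<alpha>) (k, \<beta>)) = 1" .
  next
    fix \<beta> assume b: "\<beta> \<in> Z"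
    have "(\<Sum>\<alpha>\<in>Z. \<Sum>k\<in>T. W (i, \<alpha>) (k, \<beta>)) = (\<Sum>\<alpha>\<in>Z. \<Sum>k\<in>T. W (k, \<alpha>) (i, \<beta>))"
      by (rule sum.cong[OF refl]) (rule part1[OF X rel _ b i i], simp)
    also have "\<dots> = (\<Sum>k\<in>T. \<Sum>\<alpha>\<in>Z. W (k, \<alpha>) (i, \<beta>))" by (rule sum.swap)
    also have "\<dots> = (\<Sum>(k, \<alpha>)\<in>T \<times> Z. W (k, \<alpha>) (i, \<beta>))" by (rule sum.cartesian_product)
    also have "\<dots> = (\<Sum>x\<in>T \<times> Z. W x (i, \<beta>))" by (simp add: case_prod_beta')
    also have "\<dots> = 1" using colW i b by auto
    finally show "(\<Sum>\<alpha>\<in>Z. \<Sum>k\<in>T. W (i, \<alpha>) (k, \<beta>)) = 1" .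
  qed
qed

end
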